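(* Let $X_1,X_2,\dots$ be i.i.d. real random variables with $A\le X_1\le B$ almost surely for constants $A<B$, let $\mu:=\mathbb E[X_1]$ and $\bar X_k:=\frac1k\sum_{i=1}^kX_i$. Then for every $n\in\mathbb N$ and every $x>0$, $$\mathbb P\Big(\sup_{k\ge n}|\bar X_k-\mu|>x\Big)\le 2\exp\{-2(B-A)^{-2}\,n\,x^2\}.$$ *)

theory Defs
  imports "HOL-Probability.Probability"
begin

end

theory Submission
  imports Defs "HOL-Combinatorics.Permutations"
begin


definition swp :: "nat \<Rightarrow> nat \<Rightarrow> nat \<Rightarrow> (nat \<Rightarrow> real) \<Rightarrow> nat \<Rightarrow> real" where
  "swp N a b f = (\<lambda>i\<in>{1..N}. f (Transposition.transpose a b i))"

definition Zf :: "real \<Rightarrow> real \<Rightarrow> nat \<Rightarrow> (nat \<Rightarrow> real) \<Rightarrow> ennreal" where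
  "Zf lam mu m f = ennreal (exp (lam * ((\<Sum>i=1..m. f i) / real m - mu)))"

lemma jensen_aux:
  fixes g :: "nat \<Rightarrow> real"
  assumes k: "2 \<le> k" and lam: "lam \<ge> 0"
  shows "exp (lam * ((\<Sum>i=1..k. g i) / real k - mu)) \<le>
         (\<Sum>j=1..k. (1 / real k) * exp (lam * (((\<Sum>i=1..k. g i) - g j) / real (k - 1) - mu)))"
proof -
  define S where "S = (\<Sum>i=1..k. g i)"
  define y where "y j = (S - g j) / real (k - 1) - mu" for j
  have k1: "real (k - 1) = real k - 1" using k by simp
  have k1pos: "real k - 1 > 0" using k by simp
  have "(\<Sum>j=1..k. (1 / real k) *\<^sub>R y j) = (1 / real k) * (\<Sum>j=1..k. y j)"
    by (simp add: sum_distrib_left)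
  also have "(\<Sum>j=1..k. y j) = (\<Sum>j=1..k. (S - g j) / real (k - 1)) - real k * mu"
    by (simp add: y_def sum_subtractf)
  also have "(\<Sum>j=1..k. (S - g j) / real (k - 1)) = (\<Sum>j=1..k. (S - g j)) / real (k - 1)"
    by (rule sum_divide_distrib[symmetric])
  also have "(\<Sum>j=1..k. (S - g j)) = real k * S - S"
    by (simp add: sum_subtractf S_def)
  also have "(1 / real k) * ((real k * S - S) / real (k - 1) - real k * mu) = S / real k - mu"
    using k1pos k by (simp add: k1 field_simps)
  finally have eq: "(\<Sum>j=1..k. (1 / real k) *\<^sub>R y j) = S / real k - mu" .
  have "exp (lam * (\<Sum>j=1..k. (1 / real k) *\<^sub>R y j)) \<le> (\<Sum>j=1..k. (1 / real k) * exp (lam * y j))"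
    by (rule convex_on_sum[OF _ _ convex_on_exp[OF lam]]) (use k in auto)
  then show ?thesis unfolding eq by (simp add: y_def S_def)
qed

lemma set_gt: "g \<in> borel_measurable M \<Longrightarrow> {w \<in> space M. (c::real) < g w} \<in> sets M"
  by measurable

lemma set_le: "g \<in> borel_measurable M \<Longrightarrow> {w \<in> space M. g w \<le> (c::real)} \<in> sets M"
  by measurable

locale QS =
  fixes D :: "real measure" and N :: nat
  assumes D: "prob_space D" and sD: "sets D = sets borel"
begin

abbreviation "Q \<equiv> PiM {1..N} (\<lambda>_. D)"

lemma prob_Q: "prob_space Q"
  using D by (intro prob_space_PiM) auto

lemma coord_meas: "i \<in> {1..N} \<Longrightarrow> (\<lambda>f. f i) \<in> borel_measurable Q"
  using measurable_component_singleton[of i "{1..N}" "\<lambda>_. D"]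
  by (simp only: measurable_cong_sets[OF refl sD])

lemma sum_meas: "m \<le> N \<Longrightarrow> (\<lambda>f. \<Sum>i=1..m. f i) \<in> borel_measurable Q"
proof (intro borel_measurable_sum)
  fix i assume "i \<in> {1..m}" "m \<le> N"
  then show "(\<lambda>f. f i) \<in> borel_measurable Q" by (intro coord_meas) auto
qed

lemma Zf_meas: "m \<le> N \<Longrightarrow> Zf lam mu m \<in> borel_measurable Q"
proof -
  assume m: "m \<le> N"
  have "(\<lambda>s. ennreal (exp (lam * (s / real m - mu)))) \<in> borel_measurable borel"
    by measurable
  from measurable_compose[OF sum_meas[OF m] this] show ?thesis
    unfolding Zf_def .
qed

lemma swp_distr:
  assumes "a \<in> {1..N}" "b \<in> {1..N}"
  shows "distr Q Q (swp N a b) = Q"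
proof -
  have p: "Transposition.transpose a b permutes {1..N}" using assms by (intro permutes_swap_id)
  have "distr Q (PiM {1..N} (\<lambda>i. (\<lambda>_. D) (Transposition.transpose a b i))) (\<lambda>\<omega>. \<lambda>n\<in>{1..N}. \<omega> (Transposition.transpose a b n))
     = PiM {1..N} (\<lambda>i. (\<lambda>_. D) (Transposition.transpose a b i))"
  proof (rule distr_PiM_reindex)
    show "inj_on (Transposition.transpose a b) {1..N}" using permutes_inj_on[OF p] .
    show "Transposition.transpose a b \<in> {1..N} \<rightarrow> {1..N}" using permutes_in_image[OF p] by auto
  qed (rule D)
  moreover have "swp N a b = (\<lambda>\<omega>. \<lambda>n\<in>{1..N}. \<omega> (Transposition.transpose a b n))"
    by (rule ext) (simp only: swp_def)
  ultimately show ?thesis by (simp only:)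
qed

lemma swp_meas:
  assumes "a \<in> {1..N}" "b \<in> {1..N}"
  shows "swp N a b \<in> measurable Q Q"
  unfolding swp_def
proof (rule measurable_restrict)
  fix i assume "i \<in> {1..N}"
  then have "Transposition.transpose a b i \<in> {1..N}"
    using permutes_in_image[OF permutes_swap_id[OF assms]] by simp
  then show "(\<lambda>x. x (Transposition.transpose a b i)) \<in> measurable Q D"
    by (rule measurable_component_singleton)
qed

lemma swp_sum:
  assumes "a \<in> {1..m}" "b \<in> {1..m}" "m \<le> N"
  shows "(\<Sum>i=1..m. swp N a b f i) = (\<Sum>i=1..m. f i)"
proof -
  have p: "Transposition.transpose a b permutes {1..m}" using assms by (intro permutes_swap_id)
  have "(\<Sum>i=1..m. swp N a b f i) = (\<Sum>i=1..m. f (Transposition.transpose a b i))"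
    using assms by (intro sum.cong) (auto simp: swp_def)
  also have "\<dots> = (\<Sum>i=1..m. f i)" using sum.permute[OF p, of f] by (simp add: comp_def)
  finally show ?thesis .
qed

lemma swp_space: "a \<in> {1..N} \<Longrightarrow> b \<in> {1..N} \<Longrightarrow> f \<in> space Q \<Longrightarrow> swp N a b f \<in> space Q"
  using swp_meas[of a b] measurable_space[of "swp N a b" Q Q f] by simp

lemma swp_nn_integral:
  assumes "a \<in> {1..N}" "b \<in> {1..N}" "h \<in> borel_measurable Q"
  shows "(\<integral>\<^sup>+f. h (swp N a b f) \<partial>Q) = (\<integral>\<^sup>+f. h f \<partial>Q)"
proof -
  have "(\<integral>\<^sup>+f. h f \<partial>Q) = (\<integral>\<^sup>+f. h f \<partial>distr Q Q (swp N a b))"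
    by (simp only: swp_distr[OF assms(1,2)])
  also have "\<dots> = (\<integral>\<^sup>+f. h (swp N a b f) \<partial>Q)"
  proof (rule nn_integral_distr[OF swp_meas[OF assms(1,2)]])
    show "h \<in> borel_measurable (distr Q Q (swp N a b))"
      by (simp only: swp_distr[OF assms(1,2)] assms(3))
  qed
  finally show ?thesis ..
qed

lemma KL:
  assumes k: "2 \<le> k" "k \<le> N" and E: "E \<in> sets Q"
    and inv: "\<And>a b f. a \<in> {1..k} \<Longrightarrow> b \<in> {1..k} \<Longrightarrow> f \<in> space Q \<Longrightarrow> (swp N a b f \<in> E) = (f \<in> E)"
    and lam: "lam \<ge> 0"
  shows "(\<integral>\<^sup>+f. Zf lam mu k f * indicator E f \<partial>Q) \<le> (\<integral>\<^sup>+f. Zf lam mu (k - 1) f * indicator E f \<partial>Q)"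
proof -
  define W where "W j f = ennreal (exp (lam * (((\<Sum>i=1..k. f i) - f j) / real (k - 1) - mu)))" for j f
  define R where "R = (\<integral>\<^sup>+f. Zf lam mu (k - 1) f * indicator E f \<partial>Q)"
  have Wm: "(\<lambda>f. W j f * indicator E f) \<in> borel_measurable Q" if j: "j \<in> {1..k}" for j
  proof -
    have "(\<lambda>f. (\<Sum>i=1..k. f i) - f j) \<in> borel_measurable Q"
      using sum_meas[of k] coord_meas[of j] j k by (intro borel_measurable_diff) auto
    moreover have "(\<lambda>s. ennreal (exp (lam * (s / real (k - 1) - mu)))) \<in> borel_measurable borel"
      by measurable
    ultimately have "W j \<in> borel_measurable Q"
      unfolding W_def[abs_def] by (rule measurable_compose)
    moreover have "indicator E \<in> borel_measurable Q" using E by simp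
    ultimately show ?thesis by (rule borel_measurable_times_ennreal)
  qed
  have Zm: "(\<lambda>f. Zf lam mu (k - 1) f * indicator E f) \<in> borel_measurable Q"
    using Zf_meas[of "k - 1" lam mu] k E by (intro borel_measurable_times_ennreal) auto
  have W_eq: "(\<integral>\<^sup>+f. W j f * indicator E f \<partial>Q) = R" if j: "j \<in> {1..k}" for j
  proof -
    have jN: "j \<in> {1..N}" and kN: "k \<in> {1..N}" using j k by auto
    have "R = (\<integral>\<^sup>+f. Zf lam mu (k - 1) (swp N j k f) * indicator E (swp N j k f) \<partial>Q)"
      unfolding R_def by (rule swp_nn_integral[OF jN kN Zm, symmetric])
    also have "\<dots> = (\<integral>\<^sup>+f. W j f * indicator E f \<partial>Q)"
    proof (rule nn_integral_cong)
      fix f assume f: "f \<in> space Q"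
      have jk: "j \<in> {1..k}" "k \<in> {1..k}" using j k by auto
      have s1: "(\<Sum>i=1..k. swp N j k f i) = (\<Sum>i=1..k. f i)"
        by (rule swp_sum) (use jk k in auto)
      have kk: "k = Suc (k - 1)" using k by simp
      have s2: "(\<Sum>i=1..k. swp N j k f i) = (\<Sum>i=1..k-1. swp N j k f i) + swp N j k f k"
        by (subst kk, subst sum.cl_ivl_Suc) (use k in auto)
      have s3: "swp N j k f k = f j" using kN by (simp add: swp_def)
      have s4: "(\<Sum>i=1..k-1. swp N j k f i) = (\<Sum>i=1..k. f i) - f j"
        using s1 s2 s3 by simp
      have s5: "indicator E (swp N j k f) = (indicator E f :: ennreal)"
        using inv[OF jk f] by (simp add: indicator_def)
      show "Zf lam mu (k - 1) (swp N j k f) * indicator E (swp N j k f) = W j f * indicator E f"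
        unfolding s5 Zf_def W_def s4 ..
    qed
    finally show ?thesis by simp
  qed
  have pw: "Zf lam mu k f \<le> (\<Sum>j=1..k. ennreal (1 / real k) * W j f)" for f
  proof -
    have "Zf lam mu k f \<le> ennreal (\<Sum>j=1..k. (1 / real k) * exp (lam * (((\<Sum>i=1..k. f i) - f j) / real (k - 1) - mu)))"
      unfolding Zf_def by (rule ennreal_leI, rule jensen_aux[OF k(1) lam])
    also have "\<dots> = (\<Sum>j=1..k. ennreal (1 / real k) * W j f)"
      by (simp add: W_def ennreal_mult[symmetric])
    finally show ?thesis .
  qed
  have "(\<integral>\<^sup>+f. Zf lam mu k f * indicator E f \<partial>Q) \<le> (\<integral>\<^sup>+f. (\<Sum>j=1..k. ennreal (1 / real k) * (W j f * indicator E f)) \<partial>Q)"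
  proof (rule nn_integral_mono)
    fix f
    have "Zf lam mu k f * indicator E f \<le> (\<Sum>j=1..k. ennreal (1 / real k) * W j f) * indicator E f"
      by (rule mult_right_mono[OF pw]) simp
    then show "Zf lam mu k f * indicator E f \<le> (\<Sum>j=1..k. ennreal (1 / real k) * (W j f * indicator E f))"
      by (simp add: sum_distrib_right mult.assoc)
  qed
  also have "\<dots> = (\<Sum>j=1..k. ennreal (1 / real k) * (\<integral>\<^sup>+f. W j f * indicator E f \<partial>Q))"
  proof -
    have "(\<integral>\<^sup>+f. (\<Sum>j=1..k. ennreal (1 / real k) * (W j f * indicator E f)) \<partial>Q)
        = (\<Sum>j=1..k. \<integral>\<^sup>+f. ennreal (1 / real k) * (W j f * indicator E f) \<partial>Q)"
      by (rule nn_integral_sum) (rule borel_measurable_times_ennreal[OF borel_measurable_const Wm])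
    also have "\<dots> = (\<Sum>j=1..k. ennreal (1 / real k) * (\<integral>\<^sup>+f. W j f * indicator E f \<partial>Q))"
      by (rule sum.cong[OF refl], rule nn_integral_cmult, rule Wm)
    finally show ?thesis .
  qed
  also have "\<dots> = (\<Sum>j=1..k. ennreal (1 / real k) * R)"
    by (rule sum.cong[OF refl], subst W_eq) auto
  also have "\<dots> = of_nat k * ennreal (1 / real k) * R"
    by (simp add: mult.assoc)
  also have "of_nat k * ennreal (1 / real k) = 1"
    using k by (simp add: ennreal_of_nat_eq_real_of_nat ennreal_mult[symmetric])
  finally show ?thesis by (simp add: R_def)
qed

lemma iterate:
  assumes n: "1 \<le> n" "n \<le> k" "k \<le> N" and E: "E \<in> sets Q"
    and inv: "\<And>a b f. a \<in> {1..k} \<Longrightarrow> b \<in> {1..k} \<Longrightarrow> f \<in> space Q \<Longrightarrow> (swp N a b f \<in> E) = (f \<in> E)"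
    and lam: "lam \<ge> 0"
  shows "(\<integral>\<^sup>+f. Zf lam mu k f * indicator E f \<partial>Q) \<le> (\<integral>\<^sup>+f. Zf lam mu n f * indicator E f \<partial>Q)"
proof -
  have "n \<le> m \<Longrightarrow> m \<le> k \<Longrightarrow> (\<integral>\<^sup>+f. Zf lam mu m f * indicator E f \<partial>Q) \<le> (\<integral>\<^sup>+f. Zf lam mu n f * indicator E f \<partial>Q)" for m
  proof (induction m)
    case 0
    then show ?case using n by simp
  next
    case (Suc m)
    show ?case
    proof (cases "n = Suc m")
      case True
      then show ?thesis by simp
    next
      case False
      then have nm: "n \<le> m" using Suc.prems by simp
      have "(\<integral>\<^sup>+f. Zf lam mu (Suc m) f * indicator E f \<partial>Q) \<le> (\<integral>\<^sup>+f. Zf lam mu (Suc m - 1) f * indicator E f \<partial>Q)"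
        by (rule KL) (use nm n Suc.prems E inv lam in auto)
      also have "\<dots> \<le> (\<integral>\<^sup>+f. Zf lam mu n f * indicator E f \<partial>Q)"
        using Suc.IH nm Suc.prems by simp
      finally show ?thesis .
    qed
  qed
  then show ?thesis using n by simp
qed

lemma avg_meas: "k \<le> N \<Longrightarrow> (\<lambda>f. (\<Sum>i=1..k. f i) / real k - mu) \<in> borel_measurable Q"
  using sum_meas[of k] by (intro borel_measurable_diff borel_measurable_divide) auto

lemma Ev_sets_Q: "{f \<in> space Q. \<exists>k\<in>{n..N}. (\<Sum>i=1..k. f i) / real k - mu > x} \<in> sets Q"
proof -
  have "{f \<in> space Q. \<exists>k\<in>{n..N}. (\<Sum>i=1..k. f i) / real k - mu > x}
      = (\<Union>k\<in>{n..N}. {f \<in> space Q. x < (\<Sum>i=1..k. f i) / real k - mu})" by auto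
  also have "\<dots> \<in> sets Q"
    using avg_meas by (intro sets.finite_UN set_gt) auto
  finally show ?thesis .
qed

lemma maxQ:
  assumes n: "1 \<le> n" "n \<le> N" and lam: "lam > 0"
  shows "ennreal (exp (lam * x)) * emeasure Q {f \<in> space Q. \<exists>k\<in>{n..N}. (\<Sum>i=1..k. f i) / real k - mu > x}
           \<le> (\<integral>\<^sup>+f. Zf lam mu n f \<partial>Q)"
proof -
  define av where "av k f = (\<Sum>i=1..k. f i) / real k - mu" for k f
  define Ev where "Ev = {f \<in> space Q. \<exists>k\<in>{n..N}. av k f > x}"
  define G where "G k = {f \<in> space Q. av k f > x \<and> (\<forall>j\<in>{k<..N}. av j f \<le> x)}" for k
  have avm: "k \<le> N \<Longrightarrow> av k \<in> borel_measurable Q" for k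
    unfolding av_def[abs_def] by (rule avg_meas)
  have Ev_sets: "Ev \<in> sets Q"
  proof -
    have "Ev = (\<Union>k\<in>{n..N}. {f \<in> space Q. av k f > x})" by (auto simp: Ev_def)
    also have "\<dots> \<in> sets Q"
      using avm n by (intro sets.finite_UN set_gt) auto
    finally show ?thesis .
  qed
  have G_sets: "G k \<in> sets Q" if k: "k \<le> N" for k
  proof -
    have "G k = {f \<in> space Q. av k f > x} \<inter> (space Q - (\<Union>j\<in>{k<..N}. {f \<in> space Q. x < av j f}))"
      by (auto simp: G_def not_less)
    also have "\<dots> \<in> sets Q"
      using avm k
      by (intro sets.Int sets.Diff sets.finite_UN sets.top set_gt) auto
    finally show ?thesis .
  qed
  have av_swp: "av j (swp N a b f) = av j f" if "a \<in> {1..k}" "b \<in> {1..k}" "k \<le> j" "j \<le> N" for a b f j k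
    unfolding av_def using that by (subst swp_sum) auto
  have G_inv: "(swp N a b f \<in> G k) = (f \<in> G k)" if "a \<in> {1..k}" "b \<in> {1..k}" "f \<in> space Q" "k \<le> N" for a b f k
  proof -
    have sp: "swp N a b f \<in> space Q" using that by (intro swp_space) auto
    have "av j (swp N a b f) = av j f" if "k \<le> j" "j \<le> N" for j
      using av_swp[of a k b j f] that \<open>a \<in> {1..k}\<close> \<open>b \<in> {1..k}\<close> by simp
    then have ek: "av k (swp N a b f) = av k f" using that(4) by simp
    show ?thesis using sp that(3) ek \<open>\<And>j. k \<le> j \<Longrightarrow> j \<le> N \<Longrightarrow> av j (swp N a b f) = av j f\<close>
      unfolding G_def by auto
  qed
  define c where "c = ennreal (exp (lam * x))"
  have pw1: "c * indicator Ev f \<le> (\<Sum>k\<in>{n..N}. Zf lam mu k f * indicator (G k) f)" if f: "f \<in> space Q" for f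
  proof (cases "f \<in> Ev")
    case False
    then show ?thesis by simp
  next
    case True
    define K where "K = {k \<in> {n..N}. av k f > x}"
    have Kne: "K \<noteq> {}" and Kfin: "finite K" using True by (auto simp: K_def Ev_def)
    define k0 where "k0 = Max K"
    have k0K: "k0 \<in> K" unfolding k0_def using Kne Kfin by (rule Max_in[rotated])
    have "f \<in> G k0"
    proof -
      have "av j f \<le> x" if "j \<in> {k0<..N}" for j
      proof (rule ccontr)
        assume "\<not> av j f \<le> x"
        then have "j \<in> K" using that k0K by (auto simp: K_def)
        then have "j \<le> k0" unfolding k0_def using Kfin by simp
        then show False using that by simp
      qed
      then show ?thesis using k0K f by (auto simp: G_def K_def)
    qed
    have "c \<le> Zf lam mu k0 f"
      unfolding c_def Zf_def using k0K lam by (auto simp: K_def av_def intro!: ennreal_leI)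
    also have "\<dots> = Zf lam mu k0 f * indicator (G k0) f" using \<open>f \<in> G k0\<close> by simp
    also have "\<dots> \<le> (\<Sum>k\<in>{n..N}. Zf lam mu k f * indicator (G k) f)"
      by (rule member_le_sum) (use k0K in \<open>auto simp: K_def\<close>)
    finally show ?thesis using True by simp
  qed
  have pw2: "(\<Sum>k\<in>{n..N}. Zf lam mu n f * indicator (G k) f) \<le> Zf lam mu n f" if f: "f \<in> space Q" for f
  proof (cases "\<exists>k\<in>{n..N}. f \<in> G k")
    case False
    then show ?thesis by simp
  next
    case True
    then obtain k0 where k0: "k0 \<in> {n..N}" "f \<in> G k0" by blast
    have other: "f \<notin> G k" if "k \<in> {n..N}" "k \<noteq> k0" for k
    proof
      assume fk: "f \<in> G k"
      show False
      proof (cases "k < k0")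
        case True
        then have "k0 \<in> {k<..N}" using k0 by auto
        then show False using fk k0 by (force simp: G_def)
      next
        case False
        then have "k0 < k" using that by simp
        then have "k \<in> {k0<..N}" using that by auto
        then show False using fk k0 by (force simp: G_def)
      qed
    qed
    have "(\<Sum>k\<in>{n..N}. Zf lam mu n f * indicator (G k) f) = Zf lam mu n f * indicator (G k0) f"
      by (rule sum.remove[OF _ k0(1), THEN trans]) (use other in \<open>auto intro!: sum.neutral\<close>)
    then show ?thesis using k0 by simp
  qed
  have "c * emeasure Q Ev = (\<integral>\<^sup>+f. c * indicator Ev f \<partial>Q)"
    by (rule nn_integral_cmult_indicator[symmetric, OF Ev_sets])
  also have "\<dots> \<le> (\<integral>\<^sup>+f. (\<Sum>k\<in>{n..N}. Zf lam mu k f * indicator (G k) f) \<partial>Q)"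
    by (rule nn_integral_mono) (rule pw1)
  also have "\<dots> = (\<Sum>k\<in>{n..N}. \<integral>\<^sup>+f. Zf lam mu k f * indicator (G k) f \<partial>Q)"
    by (rule nn_integral_sum) (use G_sets Zf_meas in \<open>auto intro!: borel_measurable_times_ennreal\<close>)
  also have "\<dots> \<le> (\<Sum>k\<in>{n..N}. \<integral>\<^sup>+f. Zf lam mu n f * indicator (G k) f \<partial>Q)"
  proof (rule sum_mono)
    fix k assume k: "k \<in> {n..N}"
    show "(\<integral>\<^sup>+f. Zf lam mu k f * indicator (G k) f \<partial>Q) \<le> (\<integral>\<^sup>+f. Zf lam mu n f * indicator (G k) f \<partial>Q)"
      by (rule iterate) (use n k G_sets G_inv lam in auto)
  qed
  also have "\<dots> = (\<integral>\<^sup>+f. (\<Sum>k\<in>{n..N}. Zf lam mu n f * indicator (G k) f) \<partial>Q)"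
    by (rule nn_integral_sum[symmetric]) (use G_sets Zf_meas n in \<open>auto intro!: borel_measurable_times_ennreal\<close>)
  also have "\<dots> \<le> (\<integral>\<^sup>+f. Zf lam mu n f \<partial>Q)"
    by (rule nn_integral_mono) (rule pw2)
  finally show ?thesis unfolding c_def Ev_def av_def .
qed

end



lemma iid_facts:
  fixes M :: "'a measure" and X :: "nat \<Rightarrow> 'a \<Rightarrow> real"
  assumes P: "prob_space M"
    and rv: "\<And>i. i \<ge> 1 \<Longrightarrow> X i \<in> borel_measurable M"
    and ident: "\<And>i. i \<ge> 1 \<Longrightarrow> distr M borel (X i) = distr M borel (X 1)"
    and bnd: "AE \<omega> in M. A \<le> X 1 \<omega> \<and> X 1 \<omega> \<le> B"
    and i: "i \<ge> 1"
  shows "AE \<omega> in M. X i \<omega> \<in> {A..B}"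
    and "prob_space.expectation M (X i) = prob_space.expectation M (X 1)"
proof -
  have r1: "X 1 \<in> borel_measurable M" using rv by simp
  have "AE y in distr M borel (X 1). y \<in> {A..B}"
    using bnd by (subst AE_distr_iff[OF r1]) auto
  then have "AE y in distr M borel (X i). y \<in> {A..B}" by (simp only: ident[OF i])
  then show "AE \<omega> in M. X i \<omega> \<in> {A..B}"
    by (subst (asm) AE_distr_iff[OF rv[OF i]]) auto
  have "integral\<^sup>L M (X i) = integral\<^sup>L (distr M borel (X i)) (\<lambda>y. y)"
    by (rule integral_distr[symmetric, OF rv[OF i]]) simp
  also have "\<dots> = integral\<^sup>L (distr M borel (X 1)) (\<lambda>y. y)" using ident[OF i] by simp
  also have "\<dots> = integral\<^sup>L M (X 1)"
    by (rule integral_distr[OF r1]) simp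
  finally show "prob_space.expectation M (X i) = prob_space.expectation M (X 1)" .
qed

lemma mgf:
  fixes M :: "'a measure" and X :: "nat \<Rightarrow> 'a \<Rightarrow> real"
  assumes P: "prob_space M"
    and rv: "\<And>i. i \<ge> 1 \<Longrightarrow> X i \<in> borel_measurable M"
    and indep: "prob_space.indep_vars M (\<lambda>_. borel) X {1..}"
    and ident: "\<And>i. i \<ge> 1 \<Longrightarrow> distr M borel (X i) = distr M borel (X 1)"
    and bnd: "AE \<omega> in M. A \<le> X 1 \<omega> \<and> X 1 \<omega> \<le> B"
    and n: "n \<ge> 1" and lam: "lam > 0"
  shows "(\<integral>\<^sup>+\<omega>. ennreal (exp (lam * ((\<Sum>i=1..n. X i \<omega>) / real n - prob_space.expectation M (X 1)))) \<partial>M)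
          \<le> ennreal (exp (lam\<^sup>2 * (B - A)\<^sup>2 / (8 * real n)))"
proof -
  interpret prob_space M by (rule P)
  define \<mu> where "\<mu> = expectation (X 1)"
  define l where "l = lam / real n"
  have l: "l > 0" using lam n by (simp add: l_def)
  have ind: "indep_vars (\<lambda>_. borel) X {1..n}"
    by (rule indep_vars_subset[OF indep]) auto
  have eq: "ennreal (exp (lam * ((\<Sum>i=1..n. X i \<omega>) / real n - \<mu>))) = (\<Prod>i\<in>{1..n}. ennreal (exp (l * (X i \<omega> - \<mu>))))" for \<omega>
  proof -
    have s: "(\<Sum>i=1..n. l * (X i \<omega> - \<mu>)) = l * ((\<Sum>i=1..n. X i \<omega>) - real n * \<mu>)"
      by (simp add: sum_distrib_left[symmetric] sum_subtractf)
    have "lam * ((\<Sum>i=1..n. X i \<omega>) / real n - \<mu>) = (\<Sum>i=1..n. l * (X i \<omega> - \<mu>))"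
      unfolding s using n by (simp add: l_def field_simps)
    then show ?thesis by (simp add: exp_sum prod_ennreal)
  qed
  have "(\<integral>\<^sup>+\<omega>. ennreal (exp (lam * ((\<Sum>i=1..n. X i \<omega>) / real n - \<mu>))) \<partial>M)
      = (\<integral>\<^sup>+\<omega>. (\<Prod>i\<in>{1..n}. ennreal (exp (l * (X i \<omega> - \<mu>)))) \<partial>M)"
    by (simp only: eq)
  also have "\<dots> = (\<Prod>i\<in>{1..n}. \<integral>\<^sup>+\<omega>. ennreal (exp (l * (X i \<omega> - \<mu>))) \<partial>M)"
    by (intro indep_vars_nn_integral indep_vars_compose2[OF ind]) auto
  also have "\<dots> \<le> (\<Prod>i\<in>{1..n}. ennreal (exp (l\<^sup>2 * (B - A)\<^sup>2 / 8)))"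
  proof (intro prod_mono_ennreal)
    fix i assume i: "i \<in> {1..n}"
    then have i1: "i \<ge> 1" by simp
    interpret interval_bounded_random_variable M "X i" A B
      by unfold_locales (use rv[OF i1] iid_facts(1)[of M X, OF P rv ident bnd i1] in auto)
    have "expectation (X i) = \<mu>" unfolding \<mu>_def by (rule iid_facts(2)[of M X, OF P rv ident bnd i1])
    then show "(\<integral>\<^sup>+\<omega>. ennreal (exp (l * (X i \<omega> - \<mu>))) \<partial>M) \<le> ennreal (exp (l\<^sup>2 * (B - A)\<^sup>2 / 8))"
      using Hoeffdings_lemma_nn_integral[OF l] by simp
  qed
  also have "\<dots> = ennreal (exp (l\<^sup>2 * (B - A)\<^sup>2 / 8)) ^ n" by simp
  also have "\<dots> = ennreal (exp (real n * (l\<^sup>2 * (B - A)\<^sup>2 / 8)))"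
    by (metis ennreal_power exp_ge_zero exp_of_nat_mult)
  also have "real n * (l\<^sup>2 * (B - A)\<^sup>2 / 8) = lam\<^sup>2 * (B - A)\<^sup>2 / (8 * real n)"
    using n by (simp add: l_def power2_eq_square field_simps)
  finally show ?thesis by (simp add: \<mu>_def)
qed

lemma arith_aux:
  fixes d m x :: real
  assumes "d > 0" "m > 0"
  shows "(4 * m * x / d)\<^sup>2 * d / (8 * m) - 4 * m * x / d * x = - 2 * m * x\<^sup>2 / d"
  using assms by (simp add: field_simps power2_eq_square)

lemma one_sided:
  fixes M :: "'a measure" and X :: "nat \<Rightarrow> 'a \<Rightarrow> real"
  assumes P: "prob_space M"
    and rv: "\<And>i. i \<ge> 1 \<Longrightarrow> X i \<in> borel_measurable M"
    and indep: "prob_space.indep_vars M (\<lambda>_. borel) X {1..}"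
    and ident: "\<And>i. i \<ge> 1 \<Longrightarrow> distr M borel (X i) = distr M borel (X 1)"
    and AB: "A < B"
    and bnd: "AE \<omega> in M. A \<le> X 1 \<omega> \<and> X 1 \<omega> \<le> B"
    and n: "n \<ge> 1" and x: "x > 0" and nN: "n \<le> N"
  shows "measure M {\<omega> \<in> space M. \<exists>k\<in>{n..N}. (\<Sum>i=1..k. X i \<omega>) / real k - prob_space.expectation M (X 1) > x}
          \<le> exp (- 2 * real n * x\<^sup>2 / (B - A)\<^sup>2)"
proof -
  interpret prob_space M by (rule P)
  define \<mu> where "\<mu> = expectation (X 1)"
  define D where "D = distr M borel (X 1)"
  have r1: "X 1 \<in> borel_measurable M" using rv by simp
  have QSD: "QS D"
  proof (rule QS.intro)
    show "prob_space D" unfolding D_def by (rule prob_space_distr[OF r1])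
    show "sets D = sets borel" unfolding D_def by (rule sets_distr)
  qed
  interpret QS D N by (rule QSD)
  define I where "I = {1..N::nat}"
  define Xv where "Xv \<omega> = (\<lambda>i\<in>I. X i \<omega>)" for \<omega>
  have N1: "I \<noteq> {}" using n nN by (auto simp: I_def)
  have Xm: "Xv \<in> measurable M (PiM I (\<lambda>_. borel))"
    unfolding Xv_def[abs_def] by (rule measurable_restrict) (use rv in \<open>auto simp: I_def\<close>)
  have ind: "indep_vars (\<lambda>_. borel) X I"
    by (rule indep_vars_subset[OF indep]) (auto simp: I_def)
  have "distr M (PiM I (\<lambda>_. borel)) Xv = PiM I (\<lambda>i. distr M borel (X i))"
  proof -
    have rvI: "\<And>i. i \<in> I \<Longrightarrow> random_variable borel (X i)" using rv by (auto simp: I_def)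
    show ?thesis using indep_vars_iff_distr_eq_PiM'[where I=I and M'="\<lambda>_. borel" and X=X, OF N1 rvI] ind unfolding Xv_def[abs_def] by blast
  qed
  also have "\<dots> = Q"
  proof (rule PiM_cong)
    fix i assume "i \<in> I"
    then have "i \<ge> 1" by (simp add: I_def)
    then show "distr M borel (X i) = D" unfolding D_def by (rule ident)
  qed (simp add: I_def)
  finally have dist: "distr M (PiM I (\<lambda>_. borel)) Xv = Q" .
  have setsQ: "sets (PiM I (\<lambda>_. borel)) = sets Q"
    by (rule sets_PiM_cong) (auto simp: I_def sD)
  define Ev where "Ev = {f \<in> space Q. \<exists>k\<in>{n..N}. (\<Sum>i=1..k. f i) / real k - \<mu> > x}"
  define EvM where "EvM = {\<omega> \<in> space M. \<exists>k\<in>{n..N}. (\<Sum>i=1..k. X i \<omega>) / real k - \<mu> > x}"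
  have Ev_sets: "Ev \<in> sets (PiM I (\<lambda>_. borel))"
    unfolding setsQ Ev_def by (rule Ev_sets_Q)
  have spaceQ: "space (PiM I (\<lambda>_. borel)) = space Q"
    by (rule sets_eq_imp_space_eq[OF setsQ])
  have sumXv: "(\<Sum>i=1..k. Xv \<omega> i) = (\<Sum>i=1..k. X i \<omega>)" if "k \<le> N" for k \<omega>
    using that by (intro sum.cong) (auto simp: Xv_def I_def)
  have "emeasure Q Ev = emeasure M (Xv -` Ev \<inter> space M)"
    unfolding dist[symmetric] by (rule emeasure_distr[OF Xm Ev_sets])
  also have "Xv -` Ev \<inter> space M = EvM"
  proof -
    have "Xv \<omega> \<in> space Q" if "\<omega> \<in> space M" for \<omega>
      using measurable_space[OF Xm that] spaceQ by simp
    then show ?thesis unfolding Ev_def EvM_def using sumXv by auto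
  qed
  finally have emEq: "emeasure Q Ev = emeasure M EvM" .
  define lam where "lam = 4 * real n * x / (B - A)\<^sup>2"
  have lam: "lam > 0" using n x AB by (simp add: lam_def)
  have Zm: "Zf lam \<mu> n \<in> borel_measurable (PiM I (\<lambda>_. borel))"
    unfolding measurable_cong_sets[OF setsQ refl] by (rule Zf_meas[OF nN])
  have Zm': "Zf lam \<mu> n \<in> borel_measurable (distr M (PiM I (\<lambda>_. borel)) Xv)"
    unfolding dist by (rule Zf_meas[OF nN])
  have "(\<integral>\<^sup>+f. Zf lam \<mu> n f \<partial>Q) = (\<integral>\<^sup>+\<omega>. Zf lam \<mu> n (Xv \<omega>) \<partial>M)"
    unfolding dist[symmetric] by (rule nn_integral_distr[OF Xm Zm'])
  also have "\<dots> = (\<integral>\<^sup>+\<omega>. ennreal (exp (lam * ((\<Sum>i=1..n. X i \<omega>) / real n - \<mu>))) \<partial>M)"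
    by (rule nn_integral_cong) (simp only: Zf_def sumXv[OF nN])
  also have "\<dots> \<le> ennreal (exp (lam\<^sup>2 * (B - A)\<^sup>2 / (8 * real n)))"
    unfolding \<mu>_def by (rule mgf[OF P rv indep ident bnd n lam])
  finally have mg: "(\<integral>\<^sup>+f. Zf lam \<mu> n f \<partial>Q) \<le> ennreal (exp (lam\<^sup>2 * (B - A)\<^sup>2 / (8 * real n)))" .
  have "ennreal (exp (lam * x)) * emeasure M EvM \<le> ennreal (exp (lam\<^sup>2 * (B - A)\<^sup>2 / (8 * real n)))"
    using maxQ[OF n nN lam, of x \<mu>] mg emEq unfolding Ev_def by simp
  then have "ennreal (exp (lam * x) * measure M EvM) \<le> ennreal (exp (lam\<^sup>2 * (B - A)\<^sup>2 / (8 * real n)))"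
    by (simp add: emeasure_eq_measure ennreal_mult)
  then have "exp (lam * x) * measure M EvM \<le> exp (lam\<^sup>2 * (B - A)\<^sup>2 / (8 * real n))"
    by (subst (asm) ennreal_le_iff) auto
  then have "measure M EvM \<le> exp (lam\<^sup>2 * (B - A)\<^sup>2 / (8 * real n)) / exp (lam * x)"
    by (simp add: field_simps)
  also have "\<dots> = exp (lam\<^sup>2 * (B - A)\<^sup>2 / (8 * real n) - lam * x)"
    by (simp add: exp_diff)
  also have "lam\<^sup>2 * (B - A)\<^sup>2 / (8 * real n) - lam * x = - 2 * real n * x\<^sup>2 / (B - A)\<^sup>2"
    unfolding lam_def using arith_aux[of "(B - A)\<^sup>2" "real n" x] n AB by simp
  finally show ?thesis unfolding EvM_def \<mu>_def .
qed

lemma sets_aux: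
  assumes "finite K" "\<And>k. k \<in> K \<Longrightarrow> g k \<in> borel_measurable M"
  shows "{\<omega> \<in> space M. \<exists>k\<in>K. (c::real) < g k \<omega>} \<in> sets M"
proof -
  have "{\<omega> \<in> space M. \<exists>k\<in>K. c < g k \<omega>} = (\<Union>k\<in>K. {\<omega> \<in> space M. c < g k \<omega>})" by auto
  also have "\<dots> \<in> sets M" using assms by (intro sets.finite_UN set_gt) auto
  finally show ?thesis .
qed

theorem mainTheorem8:
  fixes M :: "'a measure" and X :: "nat \<Rightarrow> 'a \<Rightarrow> real"
    and A B x :: real and n :: nat
  assumes "prob_space M"
    and rv: "\<And>i. i \<ge> 1 \<Longrightarrow> X i \<in> borel_measurable M"
    and indep: "prob_space.indep_vars M (\<lambda>_. borel) X {1..}"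
    and ident: "\<And>i. i \<ge> 1 \<Longrightarrow> distr M borel (X i) = distr M borel (X 1)"
    and AB: "A < B"
    and bnd: "AE \<omega> in M. A \<le> X 1 \<omega> \<and> X 1 \<omega> \<le> B"
    and n: "n \<ge> 1"
    and x: "x > 0"
  shows "measure M {\<omega> \<in> space M.
           (SUP k\<in>{n..}. ereal \<bar>(\<Sum>i=1..k. X i \<omega>) / real k - prob_space.expectation M (X 1)\<bar>) > ereal x}
         \<le> 2 * exp (- 2 * (B - A) powr (-2) * real n * x\<^sup>2)"
proof -
  note P = assms(1)
  interpret prob_space M by (rule P)
  define \<mu> where "\<mu> = expectation (X 1)"
  define b where "b = exp (- 2 * real n * x\<^sup>2 / (B - A)\<^sup>2)"
  have tgt: "2 * exp (- 2 * (B - A) powr (-2) * real n * x\<^sup>2) = 2 * b"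
  proof -
    have "(B - A) powr (-2) = inverse ((B - A)\<^sup>2)"
      using AB by (simp add: powr_minus powr_numeral)
    then show ?thesis by (simp add: b_def field_simps)
  qed
  define T where "T N = {\<omega> \<in> space M. \<exists>k\<in>{n..N}. x < \<bar>(\<Sum>i=1..k. X i \<omega>) / real k - \<mu>\<bar>}" for N
  have Sm: "(\<lambda>\<omega>. \<Sum>i=1..k. X i \<omega>) \<in> borel_measurable M" for k
    by (rule borel_measurable_sum) (use rv in auto)
  have Tsets: "T N \<in> sets M" for N
    unfolding T_def by (rule sets_aux) (use Sm in \<open>auto intro!: borel_measurable_abs borel_measurable_diff borel_measurable_divide\<close>)
  have setT: "{\<omega> \<in> space M. (SUP k\<in>{n..}. ereal \<bar>(\<Sum>i=1..k. X i \<omega>) / real k - \<mu>\<bar>) > ereal x} = (\<Union>N. T N)"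
    by (auto simp: less_SUP_iff T_def) (use atLeastAtMost_iff in blast)
  have inc: "incseq T"
    by (rule incseq_SucI) (force simp: T_def)
  have lim: "(\<lambda>N. measure M (T N)) \<longlonglongrightarrow> measure M (\<Union>N. T N)"
    by (rule finite_Lim_measure_incseq) (use Tsets inc in auto)
  have negexp: "expectation (\<lambda>\<omega>. - X 1 \<omega>) = - \<mu>"
    unfolding \<mu>_def by (rule Bochner_Integration.integral_minus)
  have bT: "measure M (T N) \<le> 2 * b" for N
  proof (cases "n \<le> N")
    case False
    then have "T N = {}" by (auto simp: T_def)
    then show ?thesis by (simp add: b_def)
  next
    case nN: True
    define P1 where "P1 = {\<omega> \<in> space M. \<exists>k\<in>{n..N}. (\<Sum>i=1..k. X i \<omega>) / real k - expectation (X 1) > x}"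
    define P2 where "P2 = {\<omega> \<in> space M. \<exists>k\<in>{n..N}. (\<Sum>i=1..k. - X i \<omega>) / real k - expectation (\<lambda>\<omega>. - X 1 \<omega>) > x}"
    have m1: "measure M P1 \<le> b"
      unfolding P1_def b_def by (rule one_sided[OF P rv indep ident AB bnd n x nN])
    have rv': "(\<lambda>\<omega>. - X i \<omega>) \<in> borel_measurable M" if "i \<ge> 1" for i
      using rv[OF that] by (rule borel_measurable_uminus)
    have indep': "indep_vars (\<lambda>_. borel) (\<lambda>i \<omega>. - X i \<omega>) {1..}"
      using indep_vars_compose2[OF indep, of "\<lambda>_ y. - y" "\<lambda>_. borel"] by simp
    have ident': "distr M borel (\<lambda>\<omega>. - X i \<omega>) = distr M borel (\<lambda>\<omega>. - X 1 \<omega>)" if "i \<ge> 1" for i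
    proof -
      have "distr M borel (\<lambda>\<omega>. - X j \<omega>) = distr (distr M borel (X j)) borel uminus" if "j \<ge> 1" for j
        using distr_distr[of uminus borel borel "X j" M] rv[OF that] by (simp add: comp_def)
      then show ?thesis using ident[OF that] that by simp
    qed
    have bnd': "AE \<omega> in M. - B \<le> - X 1 \<omega> \<and> - X 1 \<omega> \<le> - A"
      using bnd by eventually_elim auto
    have m2: "measure M P2 \<le> b"
      unfolding P2_def b_def
      using one_sided[of M "\<lambda>i \<omega>. - X i \<omega>" "- B" "- A" n x N, OF P rv' indep' ident' _ bnd' n x nN] AB
      by (simp add: power2_commute)
    have P1s: "P1 \<in> sets M" unfolding P1_def
      by (rule sets_aux) (use Sm in \<open>auto intro!: borel_measurable_diff borel_measurable_divide\<close>)
    have Sm': "(\<lambda>\<omega>. \<Sum>i=1..k. - X i \<omega>) \<in> borel_measurable M" for k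
      by (rule borel_measurable_sum) (use rv' in auto)
    have P2s: "P2 \<in> sets M" unfolding P2_def
      by (rule sets_aux) (use Sm' in \<open>auto intro!: borel_measurable_diff borel_measurable_divide\<close>)
    have "T N = P1 \<union> P2"
    proof -
      have e: "(\<Sum>i=1..k. - X i \<omega>) / real k - expectation (\<lambda>\<omega>. - X 1 \<omega>) = - ((\<Sum>i=1..k. X i \<omega>) / real k - \<mu>)" for k \<omega>
        unfolding negexp by (simp add: sum_negf)
      have ab: "(x < \<bar>v\<bar>) = (x < v \<or> x < - v)" for v :: real by auto
      show ?thesis unfolding T_def P1_def P2_def e \<mu>_def[symmetric] ab bex_disj_distrib by blast
    qed
    then have "measure M (T N) \<le> measure M P1 + measure M P2"
      using measure_Un_le[OF P1s P2s] by simp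
    then show ?thesis using m1 m2 by simp
  qed
  have "measure M (\<Union>N. T N) \<le> 2 * b"
    by (rule LIMSEQ_le_const2[OF lim]) (use bT in auto)
  then show ?thesis unfolding tgt \<mu>_def[symmetric] setT .
qed


end
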